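(* Let $k$ be an infinite field of characteristic $0$, $X_1\subseteq X_2$, $Y_1\subseteq Y_2$ finite sets, $W_i=W(X_i,Y_i)=(L(X_i),A(X_i)Y_i)$ ($i=1,2$), and $H$ a representation. If $(T_1,T_2)$ with $T_1\subseteq L(X_2)$, $T_2\subseteq A(X_2)Y_2$ is $H$-closed in $W_2$, then $(T_1\cap L(X_1),\,T_2\cap A(X_1)Y_1)$ is $H$-closed in $W_1$.
   Context: A representation $H=(L,V)$ is a Lie algebra $L$ over $k$ with an $L$-module $V$; homomorphisms $(\varphi,\psi)$: Lie homomorphism $\varphi$, linear $\psi$, $\varphi(l)\circ\psi(v)=\psi(l\circ v)$. $L(X)$ free Lie algebra, $A(X)$ free associative algebra with unit, $A(X)Y$ free $A(X)$-module with basis $Y$; $W_1$ is regarded as a subrepresentation of $W_2$. For $W=W(X,Y)$ and $S_1\subseteq L(X)$, $S_2\subseteq A(X)Y$: $(S_1,S_2)'_{W,H}$ is the set of homomorphisms $(\varphi,\psi):W\to H$ with $S_1\subseteq\ker\varphi$, $S_2\subseteq\ker\psi$, $(S_1,S_2)''_{W,H}$ is the pair (intersection of these $\ker\varphi$, intersection of these $\ker\psi$), and $(S_1,S_2)$ is $H$-closed in $W$ if $(S_1,S_2)''_{W,H}=(S_1,S_2)$. *)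

theory Defs
  imports Complex_Main
begin

text \<open>Free associative algebra A(X) over k: elements are functions from words
 (x list) to k; the product is concatenation convolution. The free Lie algebra
 L(X) is realised (as usual) as the Lie subalgebra of A(X) generated by X, with
 bracket [p,q] = pq - qp. The free A(X)-module A(X)Y consists of finitely
 supported functions on words times Y.\<close>

definition wmul :: "('x list \<Rightarrow> 'k::field) \<Rightarrow> ('x list \<Rightarrow> 'k) \<Rightarrow> 'x list \<Rightarrow> 'k" where
  "wmul p q = (\<lambda>w. \<Sum>i\<le>length w. p (take i w) * q (drop i w))"

definition wbr :: "('x list \<Rightarrow> 'k::field) \<Rightarrow> ('x list \<Rightarrow> 'k) \<Rightarrow> 'x list \<Rightarrow> 'k" where
  "wbr p q = (\<lambda>w. wmul p q w - wmul q p w)"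

definition letter :: "'x \<Rightarrow> 'x list \<Rightarrow> 'k::field" where
  "letter x = (\<lambda>w. if w = [x] then 1 else 0)"

inductive_set freeLie :: "'x set \<Rightarrow> ('x list \<Rightarrow> 'k::field) set" for X :: "'x set" where
  gen: "x \<in> X \<Longrightarrow> letter x \<in> freeLie X"
| zero: "(\<lambda>_. 0) \<in> freeLie X"
| add: "p \<in> freeLie X \<Longrightarrow> q \<in> freeLie X \<Longrightarrow> (\<lambda>w. p w + q w) \<in> freeLie X"
| smult: "p \<in> freeLie X \<Longrightarrow> (\<lambda>w. c * p w) \<in> freeLie X"
| br: "p \<in> freeLie X \<Longrightarrow> q \<in> freeLie X \<Longrightarrow> wbr p q \<in> freeLie X"

definition freeMod :: "'x set \<Rightarrow> 'y set \<Rightarrow> ('x list \<times> 'y \<Rightarrow> 'k::field) set" where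
  "freeMod X Y = {m. finite {p. m p \<noteq> 0} \<and> (\<forall>w y. m (w, y) \<noteq> 0 \<longrightarrow> set w \<subseteq> X \<and> y \<in> Y)}"

definition act_free :: "('x list \<Rightarrow> 'k::field) \<Rightarrow> ('x list \<times> 'y \<Rightarrow> 'k) \<Rightarrow> 'x list \<times> 'y \<Rightarrow> 'k" where
  "act_free p m = (\<lambda>(w, y). \<Sum>i\<le>length w. p (take i w) * m (drop i w, y))"

text \<open>A representation H = (L,V): Lie algebra L over k (scalar sL, bracket br)
 with an L-module V (scalar sV, action act).\<close>
definition lie_rep :: "('k::field \<Rightarrow> 'l::ab_group_add \<Rightarrow> 'l) \<Rightarrow> ('l \<Rightarrow> 'l \<Rightarrow> 'l)
   \<Rightarrow> ('k \<Rightarrow> 'v::ab_group_add \<Rightarrow> 'v) \<Rightarrow> ('l \<Rightarrow> 'v \<Rightarrow> 'v) \<Rightarrow> bool" where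
  "lie_rep sL br sV act \<longleftrightarrow>
     vector_space sL \<and> vector_space sV \<and>
     (\<forall>a b c. br (a + b) c = br a c + br b c) \<and>
     (\<forall>a b c. br a (b + c) = br a b + br a c) \<and>
     (\<forall>r a b. br (sL r a) b = sL r (br a b)) \<and>
     (\<forall>r a b. br a (sL r b) = sL r (br a b)) \<and>
     (\<forall>a. br a a = 0) \<and>
     (\<forall>a b c. br a (br b c) + br b (br c a) + br c (br a b) = 0) \<and>
     (\<forall>a b v. act (a + b) v = act a v + act b v) \<and>
     (\<forall>a v u. act a (v + u) = act a v + act a u) \<and>
     (\<forall>r a v. act (sL r a) v = sV r (act a v)) \<and>
     (\<forall>r a v. act a (sV r v) = sV r (act a v)) \<and>
     (\<forall>a b v. act (br a b) v = act a (act b v) - act b (act a v))"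

definition rep_hom :: "'x set \<Rightarrow> 'y set \<Rightarrow> ('k::field \<Rightarrow> 'l::ab_group_add \<Rightarrow> 'l) \<Rightarrow> ('l \<Rightarrow> 'l \<Rightarrow> 'l)
   \<Rightarrow> ('k \<Rightarrow> 'v::ab_group_add \<Rightarrow> 'v) \<Rightarrow> ('l \<Rightarrow> 'v \<Rightarrow> 'v)
   \<Rightarrow> (('x list \<Rightarrow> 'k) \<Rightarrow> 'l) \<Rightarrow> (('x list \<times> 'y \<Rightarrow> 'k) \<Rightarrow> 'v) \<Rightarrow> bool" where
  "rep_hom X Y sL br sV act \<phi> \<psi> \<longleftrightarrow>
     (\<forall>p\<in>freeLie X. \<forall>q\<in>freeLie X. \<phi> (\<lambda>w. p w + q w) = \<phi> p + \<phi> q) \<and>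
     (\<forall>c. \<forall>p\<in>freeLie X. \<phi> (\<lambda>w. c * p w) = sL c (\<phi> p)) \<and>
     (\<forall>p\<in>freeLie X. \<forall>q\<in>freeLie X. \<phi> (wbr p q) = br (\<phi> p) (\<phi> q)) \<and>
     (\<forall>m\<in>freeMod X Y. \<forall>n\<in>freeMod X Y. \<psi> (\<lambda>u. m u + n u) = \<psi> m + \<psi> n) \<and>
     (\<forall>c. \<forall>m\<in>freeMod X Y. \<psi> (\<lambda>u. c * m u) = sV c (\<psi> m)) \<and>
     (\<forall>p\<in>freeLie X. \<forall>m\<in>freeMod X Y. act (\<phi> p) (\<psi> m) = \<psi> (act_free p m))"

definition kerL :: "'x set \<Rightarrow> (('x list \<Rightarrow> 'k::field) \<Rightarrow> 'l::zero) \<Rightarrow> ('x list \<Rightarrow> 'k) set" where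
  "kerL X \<phi> = {p \<in> freeLie X. \<phi> p = 0}"

definition kerM :: "'x set \<Rightarrow> 'y set \<Rightarrow> (('x list \<times> 'y \<Rightarrow> 'k::field) \<Rightarrow> 'v::zero)
   \<Rightarrow> ('x list \<times> 'y \<Rightarrow> 'k) set" where
  "kerM X Y \<psi> = {m \<in> freeMod X Y. \<psi> m = 0}"

definition dprime where
  "dprime X Y sL br sV act S1 S2 =
     {(\<phi>, \<psi>). rep_hom X Y sL br sV act \<phi> \<psi> \<and> S1 \<subseteq> kerL X \<phi> \<and> S2 \<subseteq> kerM X Y \<psi>}"

definition ddprime where
  "ddprime X Y sL br sV act S1 S2 =
     (\<Inter> {kerL X \<phi> | \<phi> \<psi>. (\<phi>, \<psi>) \<in> dprime X Y sL br sV act S1 S2},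
      \<Inter> {kerM X Y \<psi> | \<phi> \<psi>. (\<phi>, \<psi>) \<in> dprime X Y sL br sV act S1 S2})"

definition H_closed where
  "H_closed X Y sL br sV act S1 S2 \<longleftrightarrow> ddprime X Y sL br sV act S1 S2 = (S1, S2)"

end

theory Submission
  imports Defs
begin

lemma freeLie_mono: "p \<in> freeLie X1 \<Longrightarrow> X1 \<subseteq> X2 \<Longrightarrow> p \<in> freeLie X2"
  by (induction rule: freeLie.induct) (auto intro: freeLie.intros)

lemma freeMod_mono: "X1 \<subseteq> X2 \<Longrightarrow> Y1 \<subseteq> Y2 \<Longrightarrow> freeMod X1 Y1 \<subseteq> freeMod X2 Y2"
  unfolding freeMod_def by blast

lemma zero_hom:
  assumes "lie_rep sL br sV act"
  shows "rep_hom X Y sL br sV act (\<lambda>_. 0) (\<lambda>_. 0)"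
proof -
  from assms have vs: "vector_space sL" "vector_space sV"
    and a: "\<forall>a v u. act a (v + u) = act a v + act a u" and b: "\<forall>a. br a a = 0"
    unfolding lie_rep_def by auto
  have "act 0 0 = act 0 0 + act 0 0" using a by (metis add_0)
  hence z: "act 0 0 = 0" by simp
  have vsz: "sL c 0 = 0" "sV c 0 = 0" for c
  proof -
    have "sL c 0 = sL c 0 + sL c 0" using vector_space.vector_space_assms(1)[OF vs(1), of c 0 0] by simp
    thus "sL c 0 = 0" by simp
    have "sV c 0 = sV c 0 + sV c 0" using vector_space.vector_space_assms(1)[OF vs(2), of c 0 0] by simp
    thus "sV c 0 = 0" by simp
  qed
  show ?thesis unfolding rep_hom_def
    using vsz b z
    by auto
qed

theorem proposition2:
  fixes X1 X2 :: "'x set" and Y1 Y2 :: "'y set"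
    and sL :: "'k::field_char_0 \<Rightarrow> 'l::ab_group_add \<Rightarrow> 'l" and br :: "'l \<Rightarrow> 'l \<Rightarrow> 'l"
    and sV :: "'k \<Rightarrow> 'v::ab_group_add \<Rightarrow> 'v" and act :: "'l \<Rightarrow> 'v \<Rightarrow> 'v"
    and T1 :: "('x list \<Rightarrow> 'k) set" and T2 :: "('x list \<times> 'y \<Rightarrow> 'k) set"
  assumes "lie_rep sL br sV act"
    and "finite X1" and "finite X2" and "X1 \<subseteq> X2"
    and "finite Y1" and "finite Y2" and "Y1 \<subseteq> Y2"
    and "T1 \<subseteq> freeLie X2" and "T2 \<subseteq> freeMod X2 Y2"
    and "H_closed X2 Y2 sL br sV act T1 T2"
  shows "H_closed X1 Y1 sL br sV act (T1 \<inter> freeLie X1) (T2 \<inter> freeMod X1 Y1)"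
proof -
  have L12: "freeLie X1 \<subseteq> (freeLie X2 :: ('x list \<Rightarrow> 'k) set)"
    using freeLie_mono assms(4) by blast
  have M12: "freeMod X1 Y1 \<subseteq> (freeMod X2 Y2 :: ('x list \<times> 'y \<Rightarrow> 'k) set)"
    using freeMod_mono assms(4,7) by blast
  have cl1: "\<Inter> {kerL X2 \<phi> | \<phi> \<psi>. (\<phi>, \<psi>) \<in> dprime X2 Y2 sL br sV act T1 T2} = T1"
   and cl2: "\<Inter> {kerM X2 Y2 \<psi> | \<phi> \<psi>. (\<phi>, \<psi>) \<in> dprime X2 Y2 sL br sV act T1 T2} = T2"
    using assms(10) unfolding H_closed_def ddprime_def by auto
  have restr: "(\<phi>, \<psi>) \<in> dprime X1 Y1 sL br sV act (T1 \<inter> freeLie X1) (T2 \<inter> freeMod X1 Y1)"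
    if "(\<phi>, \<psi>) \<in> dprime X2 Y2 sL br sV act T1 T2" for \<phi> \<psi>
    using that L12 M12 unfolding dprime_def rep_hom_def kerL_def kerM_def by (auto 0 3)
  have z: "((\<lambda>_. 0), (\<lambda>_. 0)) \<in> dprime X1 Y1 sL br sV act (T1 \<inter> freeLie X1) (T2 \<inter> freeMod X1 Y1)"
    using zero_hom[OF assms(1)] unfolding dprime_def kerL_def kerM_def by auto
  let ?D = "dprime X1 Y1 sL br sV act (T1 \<inter> freeLie X1) (T2 \<inter> freeMod X1 Y1)"
  have A: "\<Inter> {kerL X1 \<phi> | \<phi> \<psi>. (\<phi>, \<psi>) \<in> ?D} = T1 \<inter> freeLie X1"
  proof
    show "\<Inter> {kerL X1 \<phi> | \<phi> \<psi>. (\<phi>, \<psi>) \<in> ?D} \<subseteq> T1 \<inter> freeLie X1"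
    proof
      fix x assume x: "x \<in> \<Inter> {kerL X1 \<phi> | \<phi> \<psi>. (\<phi>, \<psi>) \<in> ?D}"
      have xL: "x \<in> freeLie X1" using x z unfolding kerL_def by blast
      have "x \<in> \<Inter> {kerL X2 \<phi> | \<phi> \<psi>. (\<phi>, \<psi>) \<in> dprime X2 Y2 sL br sV act T1 T2}"
      proof (clarsimp)
        fix \<phi> \<psi> assume h: "(\<phi>, \<psi>) \<in> dprime X2 Y2 sL br sV act T1 T2"
        have "x \<in> kerL X1 \<phi>" using x restr[OF h] by blast
        thus "x \<in> kerL X2 \<phi>" using L12 unfolding kerL_def by blast
      qed
      hence "x \<in> T1" by (simp only: cl1)
      thus "x \<in> T1 \<inter> freeLie X1" using xL by simp
    qed
    show "T1 \<inter> freeLie X1 \<subseteq> \<Inter> {kerL X1 \<phi> | \<phi> \<psi>. (\<phi>, \<psi>) \<in> ?D}"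
      unfolding dprime_def by blast
  qed
  have B: "\<Inter> {kerM X1 Y1 \<psi> | \<phi> \<psi>. (\<phi>, \<psi>) \<in> ?D} = T2 \<inter> freeMod X1 Y1"
  proof
    show "\<Inter> {kerM X1 Y1 \<psi> | \<phi> \<psi>. (\<phi>, \<psi>) \<in> ?D} \<subseteq> T2 \<inter> freeMod X1 Y1"
    proof
      fix x assume x: "x \<in> \<Inter> {kerM X1 Y1 \<psi> | \<phi> \<psi>. (\<phi>, \<psi>) \<in> ?D}"
      have xL: "x \<in> freeMod X1 Y1" using x z unfolding kerM_def by blast
      have "x \<in> \<Inter> {kerM X2 Y2 \<psi> | \<phi> \<psi>. (\<phi>, \<psi>) \<in> dprime X2 Y2 sL br sV act T1 T2}"
      proof (clarsimp)
        fix \<phi> \<psi> assume h: "(\<phi>, \<psi>) \<in> dprime X2 Y2 sL br sV act T1 T2"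
        have "x \<in> kerM X1 Y1 \<psi>" using x restr[OF h] by blast
        thus "x \<in> kerM X2 Y2 \<psi>" using M12 unfolding kerM_def by blast
      qed
      hence "x \<in> T2" by (simp only: cl2)
      thus "x \<in> T2 \<inter> freeMod X1 Y1" using xL by simp
    qed
    show "T2 \<inter> freeMod X1 Y1 \<subseteq> \<Inter> {kerM X1 Y1 \<psi> | \<phi> \<psi>. (\<phi>, \<psi>) \<in> ?D}"
      unfolding dprime_def by blast
  qed
  show ?thesis unfolding H_closed_def ddprime_def using A B by simp
qed

end
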